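(* Let $\kappa=7/8$ and $9/10<\alpha<1$. Define on $[-\pi,\pi]$ (extended $2\pi$-periodically) $\bar\omega_\alpha=\mathrm{sgn}(x)|\sin x|^\alpha$, $\bar u_\alpha=\mathrm{sgn}(x)|\sin x|^{(1+\alpha)/2}$, let $\bar\psi_\alpha$ be the odd $2\pi$-periodic solution of $-\bar\psi_\alpha''=\bar\omega_\alpha$, and set $\omega_{\mathrm{res}}=\bar\omega_\alpha-\sin x$, $u_{\mathrm{res}}=\bar u_\alpha-\sin x$, $\psi_{\mathrm{res}}=\bar\psi_\alpha-\sin x$. Then, with constants independent of $\alpha$: (1) $|\partial_x^i\omega_{\mathrm{res}}|+|\partial_x^iu_{\mathrm{res}}|\lesssim|\alpha-1|\,|\sin x|^{\kappa-i}$ for $i=0,1,2,3$, and $\|\psi_{\mathrm{res}}\|_{L^\infty}+\|\psi_{\mathrm{res},x}\|_{L^\infty}\lesssim|\alpha-1|$; (2) $\big|\tfrac{\alpha-1}{2}\bar u_{\alpha,x}-\sin x\,u_{\mathrm{res},xx}\big|+\big|\sin x\,\partial_x\big[\tfrac{\alpha-1}{2}\bar u_{\alpha,x}-\sin x\,u_{\mathrm{res},xx}\big]\big|\lesssim|\alpha-1|^{1/2}|x|\,|\sin x|^{\alpha-1}$ for $x\in[-\pi,\pi]\setminus\{0,\pm\pi\}$.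
   Context: Subscripts $x$ denote derivatives in $x$. *)

theory Defs
  imports "HOL-Analysis.Analysis"
begin

definition kappa :: real where "kappa = 7/8"

text \<open>On [-pi,pi] we have
  sgn x |sin x|^a = sgn (sin x) |sin x|^a, and the right-hand side is 2pi-periodic,
  so it is exactly the periodic extension.\<close>
definition omega_bar :: "real \<Rightarrow> real \<Rightarrow> real" where
  "omega_bar \<alpha> x = sgn (sin x) * \<bar>sin x\<bar> powr \<alpha>"

definition u_bar :: "real \<Rightarrow> real \<Rightarrow> real" where
  "u_bar \<alpha> x = sgn (sin x) * \<bar>sin x\<bar> powr ((1 + \<alpha>) / 2)"

definition omega_res :: "real \<Rightarrow> real \<Rightarrow> real" where
  "omega_res \<alpha> x = omega_bar \<alpha> x - sin x"

definition u_res :: "real \<Rightarrow> real \<Rightarrow> real" where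
  "u_res \<alpha> x = u_bar \<alpha> x - sin x"

definition is_psi_bar :: "real \<Rightarrow> (real \<Rightarrow> real) \<Rightarrow> (real \<Rightarrow> real) \<Rightarrow> bool" where
  "is_psi_bar \<alpha> \<psi> \<psi>' \<longleftrightarrow>
     (\<forall>x. \<psi> (- x) = - \<psi> x) \<and> (\<forall>x. \<psi> (x + 2 * pi) = \<psi> x) \<and>
     (\<forall>x. (\<psi> has_real_derivative \<psi>' x) (at x)) \<and>
     (\<forall>x. (\<psi>' has_real_derivative (- omega_bar \<alpha> x)) (at x))"

definition G :: "real \<Rightarrow> real \<Rightarrow> real" where
  "G \<alpha> x = (\<alpha> - 1) / 2 * deriv (u_bar \<alpha>) x - sin x * (deriv ^^ 2) (u_res \<alpha>) x"

end

theory Submission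
  imports Defs
begin


lemma abs_sin_powr_deriv:
  assumes "sin x \<noteq> 0"
  shows "((\<lambda>y. \<bar>sin y\<bar> powr a) has_real_derivative (a * sgn (sin x) * \<bar>sin x\<bar> powr (a - 1) * cos x)) (at x)"
proof (cases "sin x > 0")
  case True
  have ev: "eventually (\<lambda>y. sin y > 0) (nhds x)"
    proof -
    have "open {y::real. 0 < sin y}" by (rule open_Collect_less[of "\<lambda>_. 0" sin, simplified]) (auto intro: continuous_intros)
    then show ?thesis using True eventually_nhds_in_open by fastforce
  qed
  have "((\<lambda>y. sin y powr a) has_real_derivative (a * sgn (sin x) * \<bar>sin x\<bar> powr (a - 1) * cos x)) (at x)"
    using True by (auto intro!: derivative_eq_intros)
  then show ?thesis
    by (subst DERIV_cong_ev[OF refl _ refl]) (use ev in \<open>auto elim: eventually_mono\<close>)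
next
  case False
  then have F: "sin x < 0" using assms by auto
  have ev: "eventually (\<lambda>y. sin y < 0) (nhds x)"
    proof -
    have "open {y::real. sin y < 0}" by (rule open_Collect_less[of sin "\<lambda>_. 0", simplified]) (auto intro: continuous_intros)
    then show ?thesis using F eventually_nhds_in_open by fastforce
  qed
  have "((\<lambda>y. (- sin y) powr a) has_real_derivative (a * sgn (sin x) * \<bar>sin x\<bar> powr (a - 1) * cos x)) (at x)"
    using F by (auto intro!: derivative_eq_intros)
  then show ?thesis
    by (subst DERIV_cong_ev[OF refl _ refl]) (use ev in \<open>auto elim: eventually_mono\<close>)
qed

lemma sgn_sin_deriv:
  assumes "sin x \<noteq> 0"
  shows "((\<lambda>y. sgn (sin y)) has_real_derivative 0) (at x)"
proof (cases "sin x > 0")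
  case True
  have ev: "eventually (\<lambda>y. sin y > 0) (nhds x)"
    proof -
    have "open {y::real. 0 < sin y}" by (rule open_Collect_less[of "\<lambda>_. 0" sin, simplified]) (auto intro: continuous_intros)
    then show ?thesis using True eventually_nhds_in_open by fastforce
  qed
  show ?thesis
    by (subst DERIV_cong_ev[OF refl _ refl, where g="\<lambda>_. 1"]) (use ev in \<open>auto elim: eventually_mono\<close>)
next
  case False
  then have F: "sin x < 0" using assms by auto
  have ev: "eventually (\<lambda>y. sin y < 0) (nhds x)"
    proof -
    have "open {y::real. sin y < 0}" by (rule open_Collect_less[of sin "\<lambda>_. 0", simplified]) (auto intro: continuous_intros)
    then show ?thesis using F eventually_nhds_in_open by fastforce
  qed
  show ?thesis
    by (subst DERIV_cong_ev[OF refl _ refl, where g="\<lambda>_. -1"]) (use ev in \<open>auto elim: eventually_mono\<close>)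
qed

lemma abs_sin_powr_deriv':
  "sin x \<noteq> 0 \<Longrightarrow> D = a * sgn (sin x) * \<bar>sin x\<bar> powr (a - 1) * cos x \<Longrightarrow>
   ((\<lambda>y. \<bar>sin y\<bar> powr a) has_real_derivative D) (at x)"
  using abs_sin_powr_deriv by simp

lemma sgn_sin_deriv':
  "sin x \<noteq> 0 \<Longrightarrow> D = 0 \<Longrightarrow> ((\<lambda>y. sgn (sin y)) has_real_derivative D) (at x)"
  using sgn_sin_deriv by simp

definition F0 :: "real \<Rightarrow> real \<Rightarrow> real" where
  "F0 a y = sgn (sin y) * \<bar>sin y\<bar> powr a"
definition F1 :: "real \<Rightarrow> real \<Rightarrow> real" where
  "F1 a y = a * \<bar>sin y\<bar> powr (a - 1) * cos y"
definition F2 :: "real \<Rightarrow> real \<Rightarrow> real" where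
  "F2 a y = a * sgn (sin y) * ((a - 1) * \<bar>sin y\<bar> powr (a - 2) * (cos y)^2 - \<bar>sin y\<bar> powr a)"
definition F3 :: "real \<Rightarrow> real \<Rightarrow> real" where
  "F3 a y = a * (a - 1) * (a - 2) * \<bar>sin y\<bar> powr (a - 3) * (cos y)^3
     - a * (3 * a - 2) * \<bar>sin y\<bar> powr (a - 1) * cos y"

lemma powr_m1: "0 < (S::real) \<Longrightarrow> S powr (b - 1) * S = S powr b"
  by (simp add: powr_diff)

lemma sgn_sq: "(s::real) \<noteq> 0 \<Longrightarrow> sgn s * sgn s = 1"
  by (cases "s > 0") auto

lemma sgn_abs_eq: "sgn (s::real) * \<bar>s\<bar> = s"
  by (cases "s > 0") (auto simp: sgn_if)

lemma F0_deriv: assumes "sin x \<noteq> 0" shows "(F0 a has_real_derivative F1 a x) (at x)"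
  unfolding F0_def[abs_def] F1_def
  apply (rule abs_sin_powr_deriv' sgn_sin_deriv' derivative_eq_intros assms refl)+
  using sgn_sq[OF assms] by (simp add: algebra_simps)

lemma F1_deriv: assumes "sin x \<noteq> 0" shows "(F1 a has_real_derivative F2 a x) (at x)"
  unfolding F1_def[abs_def] F2_def
  apply (rule abs_sin_powr_deriv' sgn_sin_deriv' derivative_eq_intros assms refl)+
proof -
  define S where "S = \<bar>sin x\<bar>"
  define sg where "sg = sgn (sin x)"
  define T where "T = S powr (a - 3)"
  have S0: "S > 0" using assms by (simp add: S_def)
  have sx: "sin x = sg * S" by (simp add: S_def sg_def sgn_abs_eq)
  have sg2: "sg = 1 \<or> sg = -1" using assms by (auto simp: sg_def sgn_if)
  have p2: "S powr (a - 2) = T * S" using powr_m1[OF S0, of "a - 2"] by (simp add: T_def)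
  have p1: "S powr (a - 1) = T * S * S" using powr_m1[OF S0, of "a - 1"] p2 by simp
  have p0: "S powr a = T * S * S * S" using powr_m1[OF S0, of "a"] p1 by simp
  have p11: "S powr (a - 1 - 1) = T * S" using p2 by (simp add: algebra_simps)
  have p21: "S powr (a - 2 - 1) = T" by (simp add: T_def algebra_simps)
  show "(0 * \<bar>sin x\<bar> powr (a - 1) + (a - 1) * sgn (sin x) * \<bar>sin x\<bar> powr (a - 1 - 1) * cos x * a) * cos x + - sin x * 1 * (a * \<bar>sin x\<bar> powr (a - 1)) = a * sgn (sin x) * ((a - 1) * \<bar>sin x\<bar> powr (a - 2) * (cos x)\<^sup>2 - \<bar>sin x\<bar> powr a)"
    unfolding S_def[symmetric] sg_def[symmetric] 
    unfolding p0 p1 p2 p11 p21 sx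
    unfolding T_def[symmetric]
    using sg2 by (elim disjE) (simp_all add: power2_eq_square power3_eq_cube algebra_simps)
qed

lemma F2_deriv: assumes "sin x \<noteq> 0" shows "(F2 a has_real_derivative F3 a x) (at x)"
  unfolding F2_def[abs_def] F3_def
  apply (rule abs_sin_powr_deriv' sgn_sin_deriv' derivative_eq_intros assms refl)+
proof -
  define S where "S = \<bar>sin x\<bar>"
  define sg where "sg = sgn (sin x)"
  define T where "T = S powr (a - 3)"
  have S0: "S > 0" using assms by (simp add: S_def)
  have sx: "sin x = sg * S" by (simp add: S_def sg_def sgn_abs_eq)
  have sg2: "sg = 1 \<or> sg = -1" using assms by (auto simp: sg_def sgn_if)
  have p2: "S powr (a - 2) = T * S" using powr_m1[OF S0, of "a - 2"] by (simp add: T_def)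
  have p1: "S powr (a - 1) = T * S * S" using powr_m1[OF S0, of "a - 1"] p2 by simp
  have p0: "S powr a = T * S * S * S" using powr_m1[OF S0, of "a"] p1 by simp
  have p11: "S powr (a - 1 - 1) = T * S" using p2 by (simp add: algebra_simps)
  have p21: "S powr (a - 2 - 1) = T" by (simp add: T_def algebra_simps)
  show "(0 * sgn (sin x) + 0 * a) *
     ((a - 1) * \<bar>sin x\<bar> powr (a - 2) * (cos x)\<^sup>2 - \<bar>sin x\<bar> powr a) +
     ((0 * \<bar>sin x\<bar> powr (a - 2) +
       (a - 2) * sgn (sin x) * \<bar>sin x\<bar> powr (a - 2 - 1) * cos x * (a - 1)) *
      (cos x)\<^sup>2 +
      real 2 * (- sin x * 1 * cos x ^ (2 - Suc 0)) *
      ((a - 1) * \<bar>sin x\<bar> powr (a - 2)) -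
      a * sgn (sin x) * \<bar>sin x\<bar> powr (a - 1) * cos x) *
     (a * sgn (sin x)) =
     a * (a - 1) * (a - 2) * \<bar>sin x\<bar> powr (a - 3) * cos x ^ 3 -
     a * (3 * a - 2) * \<bar>sin x\<bar> powr (a - 1) * cos x"
    unfolding S_def[symmetric] sg_def[symmetric] 
    unfolding p0 p1 p2 p11 p21 sx
    unfolding T_def[symmetric]
    using sg2 by (elim disjE) (simp_all add: power2_eq_square power3_eq_cube algebra_simps)
qed

lemma open_sin_ne: "open {y::real. sin y \<noteq> 0}"
  by (rule open_Collect_neq[of sin "\<lambda>_. 0", simplified]) (auto intro: continuous_intros)

lemma deriv_on_open:
  fixes f g :: "real \<Rightarrow> real"
  assumes "open U" "x \<in> U" "\<And>y. y \<in> U \<Longrightarrow> deriv f y = g y"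
  shows "deriv (deriv f) x = deriv g x"
proof (rule deriv_cong_ev[OF _ refl])
  show "\<forall>\<^sub>F y in nhds x. deriv f y = g y"
    using eventually_nhds_in_open[OF assms(1,2)] by (auto elim: eventually_mono simp: assms(3))
qed

lemma R_derivs:
  fixes a :: real
  defines "f \<equiv> \<lambda>y. F0 a y - sin y"
  assumes "sin x \<noteq> 0"
  shows "deriv f x = F1 a x - cos x"
    "(deriv ^^ 2) f x = F2 a x + sin x"
    "(deriv ^^ 3) f x = F3 a x + cos x"
proof -
  let ?U = "{y::real. sin y \<noteq> 0}"
  have d1: "deriv f y = F1 a y - cos y" if "y \<in> ?U" for y
    unfolding f_def using that by (intro DERIV_imp_deriv derivative_eq_intros) (auto intro: F0_deriv)
  have d2: "deriv (deriv f) y = F2 a y + sin y" if "y \<in> ?U" for y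
  proof -
    have "deriv (deriv f) y = deriv (\<lambda>y. F1 a y - cos y) y"
      by (rule deriv_on_open[OF open_sin_ne that d1]) 
    also have "\<dots> = F2 a y + sin y"
      using that by (intro DERIV_imp_deriv derivative_eq_intros) (auto intro: F1_deriv)
    finally show ?thesis .
  qed
  have d3: "deriv (deriv (deriv f)) y = F3 a y + cos y" if "y \<in> ?U" for y
  proof -
    have "deriv (deriv (deriv f)) y = deriv (\<lambda>y. F2 a y + sin y) y"
      by (rule deriv_on_open[OF open_sin_ne that d2]) 
    also have "\<dots> = F3 a y + cos y"
      using that by (intro DERIV_imp_deriv derivative_eq_intros) (auto intro: F2_deriv)
    finally show ?thesis .
  qed
  show "deriv f x = F1 a x - cos x" using d1 assms by simp
  show "(deriv ^^ 2) f x = F2 a x + sin x" using d2 assms by (simp add: numeral_2_eq_2)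
  show "(deriv ^^ 3) f x = F3 a x + cos x" using d3 assms by (simp add: numeral_3_eq_3)
qed

lemma omega_res_eq: "omega_res a = (\<lambda>y. F0 a y - sin y)"
  by (rule ext) (simp add: omega_res_def omega_bar_def F0_def)

lemma u_res_eq: "u_res a = (\<lambda>y. F0 ((1 + a) / 2) y - sin y)"
  by (rule ext) (simp add: u_res_def u_bar_def F0_def)

lemma u_bar_eq: "u_bar a = F0 ((1 + a) / 2)"
  by (rule ext) (simp add: u_bar_def F0_def)

lemma key:
  fixes S e :: real
  assumes S: "0 < S" "S \<le> 1" and e: "0 \<le> e" "e \<le> 1/10"
  shows "1 \<le> S powr (-e)" "S powr (-e) \<le> S powr (-1/8)"
    "S powr (-e) - 1 \<le> 40 * e * S powr (-1/8)" "S * S powr (-1/8) \<le> 1"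
proof -
  define L where "L = - ln S"
  have L0: "0 \<le> L" using S by (simp add: L_def)
  have pw: "S powr r = exp (- r * L)" for r using S by (simp add: powr_def L_def)
  show "1 \<le> S powr (-e)" unfolding pw using L0 e by simp
  show "S powr (-e) \<le> S powr (-1/8)" unfolding pw using L0 e mult_right_mono[of e "1/8" L] by simp
  show "S * S powr (-1/8) \<le> 1"
  proof -
    have "S * S powr (-1/8) = S powr (7/8)" using S powr_add[of S 1 "-1/8"] by simp
    also have "\<dots> \<le> 1" using S by (simp add: powr_le1)
    finally show ?thesis .
  qed
  have A: "exp (e * L) - 1 \<le> e * L * exp (e * L)"
  proof -
    have "1 + (- (e * L)) \<le> exp (- (e * L))" by (rule exp_ge_add_one_self)
    then have "(1 - e * L) * exp (e * L) \<le> exp (- (e * L)) * exp (e * L)"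
      by (intro mult_right_mono) auto
    also have "\<dots> = 1" by (simp add: exp_minus field_simps)
    finally show ?thesis by (simp add: algebra_simps)
  qed
  have B: "L \<le> 40 * exp (L / 40)"
    using exp_ge_add_one_self[of "L / 40"] by linarith
  have C: "exp (e * L) \<le> exp (L / 10)" using L0 e mult_right_mono[of e "1/10" L] by simp
  have "e * L * exp (e * L) \<le> e * (40 * exp (L / 40)) * exp (L / 10)"
    using B C e L0 by (intro mult_mono) (auto intro: mult_left_mono)
  also have "\<dots> = 40 * e * exp (L / 8)" by (simp add: exp_add[symmetric] algebra_simps)
  finally show "S powr (-e) - 1 \<le> 40 * e * S powr (-1/8)" unfolding pw using A by simp
qed



lemma ar_common:
  fixes S e P Q c :: real
  assumes "0<S" "S\<le>1" "0\<le>e" "e\<le>1/10" "1\<le>P" "P\<le>Q" "P-1\<le>40*e*Q"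
  shows "\<bar>(1-e)*P - 1\<bar> \<le> 41*e*Q"
proof -
  have "\<bar>(1-e)*P - 1\<bar> \<le> (P - 1) + e*P" using assms by (auto simp: abs_if algebra_simps)
  also have "e*P \<le> e*Q" using assms by (intro mult_left_mono) auto
  finally show ?thesis using assms by linarith
qed

lemma ar0:
  fixes S e P Q c :: real
  assumes "0<S" "S\<le>1" "0\<le>e" "e\<le>1/10" "1\<le>P" "P\<le>Q" "P-1\<le>40*e*Q"
  shows "\<bar>S*P - S\<bar> \<le> 50*e*(S*Q)"
proof -
  have "\<bar>S*P - S\<bar> = S * (P - 1)" using assms by (simp add: algebra_simps)
  also have "\<dots> \<le> S * (40*e*Q)" using assms by (intro mult_left_mono) auto
  also have "\<dots> \<le> 50*e*(S*Q)" using assms by (auto intro!: mult_right_mono simp: algebra_simps)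
  finally show ?thesis .
qed

lemma ar1:
  fixes S e P Q c :: real
  assumes "0<S" "S\<le>1" "0\<le>e" "e\<le>1/10" "1\<le>P" "P\<le>Q" "P-1\<le>40*e*Q" "\<bar>c\<bar>\<le>1"
  shows "\<bar>(1-e)*P*c - c\<bar> \<le> 50*e*Q"
proof -
  have "\<bar>(1-e)*P*c - c\<bar> = \<bar>c\<bar> * \<bar>(1-e)*P - 1\<bar>" by (simp add: abs_mult[symmetric] algebra_simps)
  also have "\<dots> \<le> 1 * (41*e*Q)" using ar_common[OF assms(1-7)] assms(8) by (intro mult_mono) auto
  also have "\<dots> \<le> 50*e*Q" using assms by auto
  finally show ?thesis .
qed

lemma ar2:
  fixes S e P Q c :: real
  assumes "0<S" "S\<le>1" "0\<le>e" "e\<le>1/10" "1\<le>P" "P\<le>Q" "P-1\<le>40*e*Q" "\<bar>c\<bar>\<le>1"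
  shows "\<bar>(1-e)*(-e*(P/S)*c^2 - P*S) + S\<bar> \<le> 50*e*(Q/S)"
proof -
  have eq: "(1-e)*(-e*(P/S)*c^2 - P*S) + S = - ((1-e)*e*c^2) * (P/S) + S * (1 - (1-e)*P)"
    using assms(1) by (simp add: field_simps)
  have c2: "c^2 \<le> 1" using assms(8) by (simp add: abs_square_le_1)
  have t1: "\<bar>- ((1-e)*e*c^2) * (P/S)\<bar> \<le> e * (Q/S)"
  proof -
    have "\<bar>- ((1-e)*e*c^2) * (P/S)\<bar> = ((1-e)*e*c^2) * (P/S)" using assms by (simp add: abs_mult)
    also have "\<dots> \<le> e * (Q/S)"
    proof (rule mult_mono)
      have "(1-e)*c^2 \<le> 1" using assms c2 by (intro mult_le_one) auto
      then show "(1-e)*e*c^2 \<le> e" using mult_left_mono[of "(1-e)*c^2" 1 e] assms by (simp add: algebra_simps)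
      show "P/S \<le> Q/S" using assms by (intro divide_right_mono) auto
    qed (use assms in auto)
    finally show ?thesis .
  qed
  have t2: "\<bar>S * (1 - (1-e)*P)\<bar> \<le> 41*e*(Q/S)"
  proof -
    have "\<bar>S * (1 - (1-e)*P)\<bar> = S * \<bar>(1-e)*P - 1\<bar>" using assms by (simp add: abs_mult abs_minus_commute)
    also have "\<dots> \<le> S * (41*e*Q)" using ar_common[OF assms(1-7)] assms by (intro mult_left_mono) auto
    also have "\<dots> \<le> (1/S) * (41*e*Q)"
    proof (rule mult_right_mono)
      show "S \<le> 1/S" using assms mult_le_one[of S S] by (simp add: field_simps)
    qed (use assms in auto)
    finally show ?thesis by simp
  qed
  have nn: "0 \<le> e*(Q/S)" using assms by auto
  have "\<bar>- ((1-e)*e*c^2) * (P/S) + S * (1 - (1-e)*P)\<bar> \<le> e * (Q/S) + 41*e*(Q/S)"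
    by (rule order_trans[OF abs_triangle_ineq add_mono[OF t1 t2]])
  also have "\<dots> \<le> 50*e*(Q/S)"
  proof -
    define K where "K = e*(Q/S)"
    have eq1: "e * (Q/S) + 41*e*(Q/S) = 42*K" and eq2: "50*e*(Q/S) = 50*K" by (simp_all add: K_def)
    have "0 \<le> K" using nn by (simp add: K_def)
    then show ?thesis by (subst eq1, subst eq2) linarith
  qed
  finally show ?thesis unfolding eq .
qed

lemma ar3:
  fixes S e P Q c :: real
  assumes "0<S" "S\<le>1" "0\<le>e" "e\<le>1/10" "1\<le>P" "P\<le>Q" "P-1\<le>40*e*Q" "\<bar>c\<bar>\<le>1"
  shows "\<bar>(1-e)*(-e)*(-e-1)*(P/(S*S))*c^3 - (1-e)*(3*(1-e)-2)*P*c + c\<bar> \<le> 50*e*(Q/(S*S))"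
proof -
  have eq: "(1-e)*(-e)*(-e-1)*(P/(S*S))*c^3 - (1-e)*(3*(1-e)-2)*P*c + c
     = ((1-e)*e*(1+e)*c^3) * (P/(S*S)) + c * ((1 - P) + (4*e - 3*e^2) * P)"
    by (simp add: algebra_simps power2_eq_square)
  have c3: "\<bar>c^3\<bar> \<le> 1" using assms(8) by (simp add: power_abs power_le_one)
  have SS: "S*S \<le> 1" using assms by (simp add: mult_le_one)
  have t1: "\<bar>((1-e)*e*(1+e)*c^3) * (P/(S*S))\<bar> \<le> 2*e * (Q/(S*S))"
  proof -
    have "\<bar>((1-e)*e*(1+e)*c^3) * (P/(S*S))\<bar> = ((1-e)*e*(1+e)) * \<bar>c^3\<bar> * (P/(S*S))"
      using assms by (simp add: abs_mult)
    also have "\<dots> \<le> (2*e) * 1 * (Q/(S*S))"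
    proof -
      have h1: "(1-e)*e*(1+e) \<le> 2*e" using assms by (simp add: algebra_simps)
      have h2: "P/(S*S) \<le> Q/(S*S)" using assms by (intro divide_right_mono) auto
      show ?thesis using assms c3 by (intro mult_mono[OF mult_mono[OF h1 c3] h2]) auto
    qed
    finally show ?thesis by simp
  qed
  have t2: "\<bar>c * ((1 - P) + (4*e - 3*e^2) * P)\<bar> \<le> 44*e*(Q/(S*S))"
  proof -
    have "\<bar>c * ((1 - P) + (4*e - 3*e^2) * P)\<bar> \<le> 1 * ((P - 1) + 4*e*Q)"
      unfolding abs_mult
    proof (intro mult_mono)
      have ee: "e*e \<le> e" using assms mult_left_mono[of e 1 e] by simp
      have "0 \<le> (4*e - 3*e^2) * P" using assms ee by (intro mult_nonneg_nonneg) (auto simp: power2_eq_square)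
      moreover have "(4*e - 3*e^2) * P \<le> 4*e*Q" using assms
        using ee by (intro mult_mono) (auto simp: power2_eq_square)
      ultimately show "\<bar>(1 - P) + (4*e - 3*e^2) * P\<bar> \<le> (P - 1) + 4*e*Q" using assms by (auto simp: abs_if)
    qed (use assms in auto)
    also have "\<dots> \<le> 44*e*Q" using assms(7) by (simp add: algebra_simps)
    also have "\<dots> \<le> 44*e*Q * (1/(S*S))" using assms SS
      by (intro mult_le_cancel_left1[THEN iffD2] ) (auto simp: field_simps)
    finally show ?thesis by simp
  qed
  have nn: "0 \<le> e*(Q/(S*S))" using assms by auto
  have "\<bar>((1-e)*e*(1+e)*c^3) * (P/(S*S)) + c * ((1 - P) + (4*e - 3*e^2) * P)\<bar> \<le> 2*e * (Q/(S*S)) + 44*e*(Q/(S*S))"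
    by (rule order_trans[OF abs_triangle_ineq add_mono[OF t1 t2]])
  also have "\<dots> \<le> 50*e*(Q/(S*S))"
  proof -
    define K where "K = e*(Q/(S*S))"
    have eq1: "2*e * (Q/(S*S)) + 44*e*(Q/(S*S)) = 46*K" and eq2: "50*e*(Q/(S*S)) = 50*K" by (simp_all add: K_def)
    have "0 \<le> K" using nn by (simp add: K_def)
    then show ?thesis by (subst eq1, subst eq2) linarith
  qed
  finally show ?thesis unfolding eq .
qed



lemma arG:
  fixes S d P Q c X w :: real
  assumes S: "0<S" "S\<le>1" and d: "0\<le>d" "d\<le>1/10" and P: "1\<le>P" "P\<le>Q" "P-1\<le>40*d*Q"
    and SQ: "S*Q \<le> 1" and c: "\<bar>c\<bar>\<le>1" and X: "S \<le> X" "1 - c \<le> X" and w: "w = 1 \<or> w = -1"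
  defines "b \<equiv> 1 - d"
  defines "H1 \<equiv> b*P*c"
  defines "H2 \<equiv> b*w*((-d)*(P/S)*c^2 - P*S)"
  defines "H3 \<equiv> b*(-d)*(-d-1)*(P/(S*S))*c^3 - b*(3*b-2)*P*c"
  shows "\<bar>(-2*d)/2 * H1 - w*S*(H2 + w*S)\<bar>
       + \<bar>w*S*((-2*d)/2 * H2 - (c*(H2 + w*S) + w*S*(H3 + c)))\<bar> \<le> 129 * d * X * (P*P)"
proof -
  have e1: "(-2*d)/2 * H1 - w*S*(H2 + w*S) = - (d*b*c*(1-c)) * P + S*S*(b*P - 1)"
    using w S unfolding H1_def H2_def by (elim disjE) (simp_all add: field_simps power2_eq_square)
  have e2: "w*S*((-2*d)/2 * H2 - (c*(H2 + w*S) + w*S*(H3 + c)))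
      = (b*d*d*c*c*(1-c)) * P + S*S*(d*b*P) + S*S*(c*((b*(3*b-1) - 2)*P + 2*(P-1)))"
    using w S unfolding H2_def H3_def by (elim disjE) (simp_all add: field_simps power2_eq_square power3_eq_cube)
  have b: "0 \<le> b" "b \<le> 1" using d by (auto simp: b_def)
  have c1: "0 \<le> 1 - c" using c by auto
  have X0: "0 \<le> X" using S X by auto
  have PP: "P \<le> P*P" using P by (simp add: mult_le_cancel_left1)
  have SSQ: "S*S*Q \<le> S" using SQ S by (simp add: mult.assoc mult_le_cancel_left1)
  have P1: "1 \<le> P*P" using P mult_mono[of 1 P 1 P] by simp
  have dXP: "d*X \<le> d*X*(P*P)" using mult_left_mono[OF P1, of "d*X"] d X0 by simp
  have bc: "\<bar>b*c\<bar> \<le> 1" using b c by (simp add: abs_mult mult_le_one)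
  have g1: "\<bar>- (d*b*c*(1-c)) * P\<bar> \<le> d*X*(P*P)"
  proof -
    have "\<bar>- (d*b*c*(1-c)) * P\<bar> = d * \<bar>b*c\<bar> * (1-c) * P" using d c1 P by (simp add: abs_mult)
    also have "\<dots> \<le> d * 1 * X * (P*P)"
      using d bc c1 X PP P by (intro mult_mono) auto
    finally show ?thesis by simp
  qed
  have bP: "\<bar>b*P - 1\<bar> \<le> 41*d*Q" unfolding b_def by (rule ar_common[OF S d P])
  have g2: "\<bar>S*S*(b*P - 1)\<bar> \<le> 41*d*X*(P*P)"
  proof -
    have "\<bar>S*S*(b*P - 1)\<bar> \<le> S*S*(41*d*Q)" using bP S by (simp add: abs_mult)
    also have "\<dots> = 41*d*(S*S*Q)" by simp
    also have "\<dots> \<le> 41*d*X" using SSQ X d by (intro mult_left_mono) auto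
    also have "\<dots> \<le> 41*d*X*(P*P)" using dXP by simp
    finally show ?thesis .
  qed
  have h1: "\<bar>(b*d*d*c*c*(1-c)) * P\<bar> \<le> d*X*(P*P)"
  proof -
    have "\<bar>(b*d*d*c*c*(1-c)) * P\<bar> = (b*d) * d * (c*c) * (1-c) * P" using d b c1 P by (simp add: abs_mult)
    also have "\<dots> \<le> 1 * d * 1 * X * (P*P)"
      using d b c1 X PP P c abs_square_le_1[of c] by (intro mult_mono) (auto intro: mult_le_one simp: power2_eq_square)
    finally show ?thesis by simp
  qed
  have h2: "\<bar>S*S*(d*b*P)\<bar> \<le> d*X*(P*P)"
  proof -
    have "\<bar>S*S*(d*b*P)\<bar> = d*(b*(S*S*P))" using S d b P by (simp add: abs_mult)
    also have "\<dots> \<le> d*(1*(S*S*Q))" using S d b P by (intro mult_left_mono mult_mono) auto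
    also have "\<dots> \<le> d*X" using SSQ X d by (intro mult_left_mono) auto
    finally show ?thesis using dXP by simp
  qed
  have h3: "\<bar>S*S*(c*((b*(3*b-1) - 2)*P + 2*(P-1)))\<bar> \<le> 85*d*X*(P*P)"
  proof -
    have dd: "d*d \<le> d" using d mult_left_mono[of d 1 d] by simp
    have q: "\<bar>b*(3*b-1) - 2\<bar> \<le> 5*d" using d dd unfolding b_def by (simp add: algebra_simps abs_if)
    have "\<bar>(b*(3*b-1) - 2)*P + 2*(P-1)\<bar> \<le> 85*d*Q"
    proof -
      define A where "A = (b*(3*b-1) - 2)*P"
      define K where "K = d*Q"
      have "\<bar>(b*(3*b-1) - 2)*P\<bar> \<le> 5*d*Q" using q P by (simp add: abs_mult) (intro mult_mono, auto)
      then have a1: "\<bar>A\<bar> \<le> 5*K" by (simp add: A_def K_def mult.assoc)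
      have a2: "P - 1 \<le> 40*K" using P by (simp add: K_def mult.assoc)
      have "\<bar>A + 2*(P-1)\<bar> \<le> \<bar>A\<bar> + \<bar>2*(P-1)\<bar>" by (rule abs_triangle_ineq)
      also have "\<dots> \<le> 85*K" using a1 a2 P by simp
      finally show ?thesis by (simp add: A_def K_def mult.assoc)
    qed
    then have "\<bar>c*((b*(3*b-1) - 2)*P + 2*(P-1))\<bar> \<le> 1 * (85*d*Q)"
      unfolding abs_mult using c by (intro mult_mono) auto
    then have "\<bar>S*S*(c*((b*(3*b-1) - 2)*P + 2*(P-1)))\<bar> \<le> S*S*(85*d*Q)"
      using S by (simp add: abs_mult mult_left_mono)
    also have "\<dots> = 85*d*(S*S*Q)" by simp
    also have "\<dots> \<le> 85*d*X" using SSQ X d by (intro mult_left_mono) auto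
    also have "\<dots> \<le> 85*d*X*(P*P)" using dXP by simp
    finally show ?thesis .
  qed
  define K where "K = d*X*(P*P)"
  have K0: "0 \<le> K" using d X0 by (simp add: K_def)
  have "\<bar>(-2*d)/2 * H1 - w*S*(H2 + w*S)\<bar> \<le> K + 41*K"
    unfolding e1 using order_trans[OF abs_triangle_ineq add_mono[OF g1 g2]] by (simp add: K_def)
  moreover have "\<bar>w*S*((-2*d)/2 * H2 - (c*(H2 + w*S) + w*S*(H3 + c)))\<bar> \<le> K + K + 85*K"
    unfolding e2 using order_trans[OF abs_triangle_ineq add_mono[OF order_trans[OF abs_triangle_ineq add_mono[OF h1 h2]] h3]]
    by (simp add: K_def)
  ultimately have "\<bar>(-2*d)/2 * H1 - w*S*(H2 + w*S)\<bar>
       + \<bar>w*S*((-2*d)/2 * H2 - (c*(H2 + w*S) + w*S*(H3 + c)))\<bar> \<le> 129 * K" using K0 by linarith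
  then show ?thesis by (simp add: K_def mult.assoc)
qed



lemma mvt_bound:
  fixes f f' :: "real \<Rightarrow> real"
  assumes d: "\<And>t. (f has_real_derivative f' t) (at t)" and b: "\<And>t. \<bar>f' t\<bar> \<le> M"
  shows "\<bar>f y - f x\<bar> \<le> M * \<bar>y - x\<bar>"
proof -
  have *: "\<bar>f v - f u\<bar> \<le> M * \<bar>v - u\<bar>" if "u < v" for u v
  proof -
    have "\<exists>z. u < z \<and> z < v \<and> f v - f u = (v - u) * f' z" by (rule MVT2[OF that]) (rule d)
    then obtain z where "f v - f u = (v - u) * f' z" by blast
    then have "\<bar>f v - f u\<bar> = \<bar>v - u\<bar> * \<bar>f' z\<bar>" by (simp add: abs_mult)
    also have "\<dots> \<le> \<bar>v - u\<bar> * M" using b by (intro mult_left_mono) auto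
    finally show ?thesis by (simp add: mult.commute)
  qed
  show ?thesis
  proof (cases x y rule: linorder_cases)
    case less then show ?thesis using * by blast
  next
    case equal then show ?thesis using b[of 0] by simp
  next
    case greater then show ?thesis using *[OF greater] by (simp add: abs_minus_commute)
  qed
qed

lemma periodic_nat:
  fixes f :: "real \<Rightarrow> 'b"
  assumes p: "\<And>x. f (x + 2*pi) = f x"
  shows "f (x + 2*pi*real n) = f x" "f (x - 2*pi*real n) = f x"
proof -
  show A: "f (x + 2*pi*real n) = f x" for x
  proof (induction n)
    case (Suc n)
    have "f (x + 2*pi*real (Suc n)) = f ((x + 2*pi*real n) + 2*pi)" by (simp add: algebra_simps)
    also have "\<dots> = f x" using p Suc by simp
    finally show ?case .
  qed simp
  show "f (x - 2*pi*real n) = f x" using A[of "x - 2*pi*real n"] by simp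
qed

lemma periodic_reduce:
  fixes f :: "real \<Rightarrow> 'b"
  assumes p: "\<And>x. f (x + 2*pi) = f x"
  shows "\<exists>y. a \<le> y \<and> y \<le> a + 2*pi \<and> f y = f x"
proof -
  define k where "k = \<lfloor>(x - a) / (2*pi)\<rfloor>"
  define y where "y = x - 2 * pi * of_int k"
  have lo: "of_int k * (2*pi) \<le> x - a" unfolding k_def by (rule floor_divide_lower) simp
  have hi: "x - a < (of_int k + 1) * (2*pi)" unfolding k_def by (rule floor_divide_upper) simp
  have "f y = f x"
  proof (cases "k \<ge> 0")
    case True
    then obtain n where "k = int n" by (metis nonneg_int_cases)
    then show ?thesis using periodic_nat(2)[of f, OF p, of x n] by (simp add: y_def)
  next
    case False
    obtain n where "k = - int n" using False by (intro that[of "nat (-k)"]) simp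
    then have "y = x + 2*pi*real n" by (simp add: y_def)
    then show ?thesis using periodic_nat(1)[of f, OF p, of x n] by simp
  qed
  moreover have "a \<le> y" "y \<le> a + 2*pi"
  proof -
    have e: "2 * pi * of_int k = of_int k * (2*pi)" by simp
    show "a \<le> y" using lo unfolding y_def e by linarith
    have "x - a < of_int k * (2*pi) + 2*pi" using hi by (simp add: distrib_right)
    then show "y \<le> a + 2*pi" unfolding y_def e by linarith
  qed
  ultimately show ?thesis by blast
qed

lemma psi_bound:
  assumes psi: "is_psi_bar \<alpha> \<psi> \<psi>'" and M: "\<And>y. \<bar>omega_bar \<alpha> y - sin y\<bar> \<le> M"
  shows "\<bar>\<psi> x - sin x\<bar> \<le> 16 * M \<and> \<bar>\<psi>' x - cos x\<bar> \<le> 16 * M"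
proof -
  define r where "r = (\<lambda>x. \<psi> x - sin x)"
  define r' where "r' = (\<lambda>x. \<psi>' x - cos x)"
  have odd: "\<And>x. \<psi> (- x) = - \<psi> x" and per: "\<And>x. \<psi> (x + 2 * pi) = \<psi> x"
    and d1: "\<And>x. (\<psi> has_real_derivative \<psi>' x) (at x)"
    and d2: "\<And>x. (\<psi>' has_real_derivative (- omega_bar \<alpha> x)) (at x)"
    using psi unfolding is_psi_bar_def by auto
  have M0: "0 \<le> M" using M[of 0] by simp
  have hr: "(r has_real_derivative r' x) (at x)" for x
    unfolding r_def r'_def by (rule derivative_eq_intros d1 refl)+ auto
  have hr': "(r' has_real_derivative (- (omega_bar \<alpha> x - sin x))) (at x)" for x
    unfolding r'_def by (rule derivative_eq_intros d2 refl)+ simp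
  have rodd: "r (- x) = - r x" for x using odd by (simp add: r_def)
  have rper: "r (x + 2*pi) = r x" for x using per by (simp add: r_def)
  have r0: "r 0 = 0" using rodd[of 0] by simp
  have rpi: "r pi = 0"
  proof -
    have "r pi = r (- pi)" using rper[of "-pi"] by simp
    then show ?thesis using rodd[of pi] by simp
  qed
  obtain z where z: "0 < z" "z < pi" "r pi - r 0 = (pi - 0) * r' z"
  proof -
    have "\<exists>z. 0 < z \<and> z < pi \<and> r pi - r 0 = (pi - 0) * r' z" by (rule MVT2) (auto intro: hr)
    then show ?thesis using that by blast
  qed
  have rz: "r' z = 0" using z r0 rpi by simp
  have r'per: "r' (x + 2*pi) = r' x" for x
  proof -
    have "((\<lambda>x. r (x + 2*pi)) has_real_derivative r' (x + 2*pi) * 1) (at x)"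
      by (rule DERIV_chain2[OF hr]) (auto intro!: derivative_eq_intros)
    moreover have "(\<lambda>x. r (x + 2*pi)) = r" using rper by auto
    ultimately show ?thesis using DERIV_unique[OF _ hr[of x]] by simp
  qed
  have b'': "\<bar>- (omega_bar \<alpha> t - sin t)\<bar> \<le> M" for t using M[of t] by simp
  have rb': "\<bar>r' x\<bar> \<le> 4 * M" for x
  proof -
    obtain y where y: "z - pi \<le> y" "y \<le> z - pi + 2*pi" "r' y = r' x"
      using periodic_reduce[of r', OF r'per, of "z - pi" x] by blast
    have "\<bar>r' y - r' z\<bar> \<le> M * \<bar>y - z\<bar>" by (rule mvt_bound[OF hr' b''])
    also have "\<dots> \<le> M * pi"
    proof (rule mult_left_mono)
      show "\<bar>y - z\<bar> \<le> pi" using y(1,2) by linarith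
    qed (rule M0)
    also have "\<dots> \<le> M * 4" using M0 pi_less_4 by (intro mult_left_mono) auto
    finally show ?thesis using y rz by simp
  qed
  have rb: "\<bar>r x\<bar> \<le> 16 * M" for x
  proof -
    obtain y where y: "- pi \<le> y" "y \<le> - pi + 2*pi" "r y = r x"
      using periodic_reduce[of r, OF rper, of "- pi" x] by blast
    have "\<bar>r y - r 0\<bar> \<le> (4*M) * \<bar>y - 0\<bar>" by (rule mvt_bound[OF hr rb'])
    also have "\<dots> \<le> (4*M) * 4"
    proof (rule mult_left_mono)
      show "\<bar>y - 0\<bar> \<le> 4" using y(1,2) pi_less_4 by linarith
    qed (use M0 in simp)
    finally show ?thesis using y r0 by simp
  qed
  show ?thesis using rb[of x] rb'[of x] M0 by (simp add: r_def r'_def)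
qed


lemma F_vals:
  fixes a x :: real
  assumes sx: "sin x \<noteq> 0"
  defines "S \<equiv> \<bar>sin x\<bar>"
  defines "P \<equiv> S powr (a - 1)"
  shows "F0 a x = sgn (sin x) * (S * P)" "F1 a x = a * P * cos x"
    "F2 a x = a * sgn (sin x) * ((a - 1) * (P / S) * (cos x)^2 - P * S)"
    "F3 a x = a * (a - 1) * (a - 2) * (P / (S * S)) * (cos x)^3 - a * (3 * a - 2) * P * cos x"
proof -
  have S0: "S > 0" using sx by (simp add: S_def)
  have pa: "S powr a = S * P" using powr_m1[OF S0, of a] by (simp add: P_def mult.commute)
  have p2: "S powr (a - 2) = P / S" using powr_m1[OF S0, of "a - 1"] S0 by (simp add: P_def field_simps)
  have p3: "S powr (a - 3) = P / (S * S)" using powr_m1[OF S0, of "a - 2"] S0 p2 by (simp add: field_simps)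
  show "F0 a x = sgn (sin x) * (S * P)" using pa by (simp add: F0_def S_def)
  show "F1 a x = a * P * cos x" by (simp add: F1_def P_def S_def)
  show "F2 a x = a * sgn (sin x) * ((a - 1) * (P / S) * (cos x)^2 - P * S)"
    using pa p2 by (simp add: F2_def S_def[symmetric] mult.commute)
  show "F3 a x = a * (a - 1) * (a - 2) * (P / (S * S)) * (cos x)^3 - a * (3 * a - 2) * P * cos x"
    using p3 by (simp add: F3_def S_def[symmetric] P_def)
qed

lemma part1_a:
  fixes a x :: real and i :: nat
  assumes a: "9/10 \<le> a" "a \<le> 1" and i: "i \<le> 3" and ix: "i = 0 \<or> sin x \<noteq> 0"
  shows "\<bar>(deriv ^^ i) (\<lambda>y. F0 a y - sin y) x\<bar> \<le> 50 * (1 - a) * \<bar>sin x\<bar> powr (kappa - real i)"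
proof (cases "sin x = 0")
  case True
  then have "i = 0" using ix by simp
  then show ?thesis using True by (simp add: F0_def)
next
  case False
  define S where "S = \<bar>sin x\<bar>"
  define e where "e = 1 - a"
  define P where "P = S powr (a - 1)"
  define Q where "Q = S powr (-1/8)"
  define w where "w = sgn (sin x)"
  define c where "c = cos x"
  have S: "0 < S" "S \<le> 1" using False by (auto simp: S_def)
  have e: "0 \<le> e" "e \<le> 1/10" using a by (auto simp: e_def)
  have Pe: "P = S powr (-e)" by (simp add: P_def e_def)
  have K: "1 \<le> P" "P \<le> Q" "P - 1 \<le> 40 * e * Q" "S * Q \<le> 1"
    using key[OF S e] unfolding Pe Q_def by auto
  have cc: "\<bar>c\<bar> \<le> 1" by (simp add: c_def)
  have w: "\<bar>w\<bar> = 1" using False by (simp add: w_def abs_sgn)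
  have sx: "sin x = w * S" by (simp add: w_def S_def sgn_abs_eq)
  have ae: "a = 1 - e" by (simp add: e_def)
  have k0: "S powr (kappa - real 0) = S * Q"
    using powr_m1[OF S(1), of "7/8"] by (simp add: kappa_def Q_def mult.commute)
  have k1: "S powr (kappa - real 1) = Q" by (simp add: kappa_def Q_def)
  have k2: "S powr (kappa - real 2) = Q / S"
  proof -
    have "S powr (kappa - real 2) = S powr (-1/8 - 1)" by (simp add: kappa_def)
    also have "\<dots> = S powr (-1/8) / S powr 1" by (rule powr_diff)
    also have "\<dots> = Q / S" using S(1) by (simp add: Q_def)
    finally show ?thesis .
  qed
  have k3: "S powr (kappa - real 3) = Q / (S * S)"
  proof -
    have "S powr (kappa - real 3) = S powr (-1/8 - 2)" by (simp add: kappa_def)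
    also have "\<dots> = S powr (-1/8) / S powr 2" by (rule powr_diff)
    also have "\<dots> = Q / S powr 2" by (simp only: Q_def)
    also have "S powr 2 = S * S" using S(1) by (simp add: power2_eq_square)
    finally show ?thesis .
  qed
  have FV: "F0 a x = w * (S * P)" "F1 a x = a * P * c"
    "F2 a x = a * w * ((a - 1) * (P / S) * c^2 - P * S)"
    "F3 a x = a * (a - 1) * (a - 2) * (P / (S * S)) * c^3 - a * (3 * a - 2) * P * c"
    using F_vals[OF False, of a] by (simp_all add: S_def P_def w_def c_def)
  have "i = 0 \<or> i = 1 \<or> i = 2 \<or> i = 3" using i by auto
  then show ?thesis
  proof (elim disjE)
    assume i0: "i = 0"
    have "\<bar>F0 a x - sin x\<bar> = \<bar>S * P - S\<bar>" unfolding FV sx using w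
      by (simp add: abs_mult right_diff_distrib[symmetric])
    also have "\<dots> \<le> 50 * e * (S * Q)" by (rule ar0[OF S e K(1-3)])
    finally show ?thesis using i0 k0 by (simp add: S_def[symmetric] e_def)
  next
    assume i1: "i = 1"
    have "\<bar>F1 a x - cos x\<bar> = \<bar>(1-e)*P*c - c\<bar>" unfolding FV by (simp add: c_def ae)
    also have "\<dots> \<le> 50 * e * Q" by (rule ar1[OF S e K(1-3) cc])
    finally show ?thesis using i1 k1 R_derivs(1)[OF False, of a] by (simp add: S_def[symmetric] e_def)
  next
    assume i2: "i = 2"
    have "\<bar>F2 a x + sin x\<bar> = \<bar>w * ((1-e)*(-e*(P/S)*c^2 - P*S) + S)\<bar>"
      unfolding FV sx by (simp add: ae algebra_simps)
    also have "\<dots> = \<bar>(1-e)*(-e*(P/S)*c^2 - P*S) + S\<bar>" using w by (simp add: abs_mult)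
    also have "\<dots> \<le> 50 * e * (Q / S)" by (rule ar2[OF S e K(1-3) cc])
    finally show ?thesis using i2 k2 R_derivs(2)[OF False, of a] by (simp add: S_def[symmetric] e_def)
  next
    assume i3: "i = 3"
    have "\<bar>F3 a x + cos x\<bar> = \<bar>(1-e)*(-e)*(-e-1)*(P/(S*S))*c^3 - (1-e)*(3*(1-e)-2)*P*c + c\<bar>"
      unfolding FV by (simp add: ae c_def) (simp add: algebra_simps)
    also have "\<dots> \<le> 50 * e * (Q / (S * S))" by (rule ar3[OF S e K(1-3) cc])
    finally show ?thesis using i3 k3 R_derivs(3)[OF False, of a] by (simp add: S_def[symmetric] e_def)
  qed
qed

lemma one_minus_cos_le: "1 - cos x \<le> \<bar>x::real\<bar>"
proof -
  have "cos x = cos (2 * (x/2))" by simp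
  also have "\<dots> = 1 - 2 * sin (x/2) ^ 2" by (rule cos_double_sin)
  finally have e: "1 - cos x = 2 * (sin (x/2))^2" by simp
  have "(sin (x/2))^2 \<le> \<bar>sin (x/2)\<bar>"
  proof -
    have "\<bar>sin (x/2)\<bar> * \<bar>sin (x/2)\<bar> \<le> \<bar>sin (x/2)\<bar> * 1"
      by (rule mult_left_mono[OF abs_sin_le_one abs_ge_zero])
    then show ?thesis by (simp add: power2_eq_square)
  qed
  also have "\<dots> \<le> \<bar>x/2\<bar>" by (rule abs_sin_x_le_abs_x)
  finally show ?thesis unfolding e by simp
qed

lemma sin_nonzero_interval:
  assumes "-pi \<le> x" "x \<le> pi" "x \<notin> {0, pi, -pi}"
  shows "sin (x::real) \<noteq> 0"
proof (cases "x > 0")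
  case True
  then show ?thesis using assms sin_gt_zero[of x] by auto
next
  case False
  then have "0 < -x" "-x < pi" using assms by auto
  then show ?thesis using sin_gt_zero[of "-x"] by auto
qed

theorem mainTheorem14:
  shows "\<exists>C>0. \<forall>\<alpha>::real. 9/10 < \<alpha> \<and> \<alpha> < 1 \<longrightarrow>
     (\<forall>i\<le>3. \<forall>x::real. (i = 0 \<or> sin x \<noteq> 0) \<longrightarrow>
        \<bar>(deriv ^^ i) (omega_res \<alpha>) x\<bar> + \<bar>(deriv ^^ i) (u_res \<alpha>) x\<bar>
          \<le> C * \<bar>\<alpha> - 1\<bar> * \<bar>sin x\<bar> powr (kappa - real i))
   \<and> (\<forall>\<psi> \<psi>'. is_psi_bar \<alpha> \<psi> \<psi>' \<longrightarrow>
        (\<forall>x. \<bar>\<psi> x - sin x\<bar> \<le> C * \<bar>\<alpha> - 1\<bar> \<and> \<bar>\<psi>' x - cos x\<bar> \<le> C * \<bar>\<alpha> - 1\<bar>))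
   \<and> (\<forall>x. -pi \<le> x \<and> x \<le> pi \<and> x \<notin> {0, pi, -pi} \<longrightarrow>
        \<bar>G \<alpha> x\<bar> + \<bar>sin x * deriv (G \<alpha>) x\<bar>
          \<le> C * sqrt \<bar>\<alpha> - 1\<bar> * \<bar>x\<bar> * \<bar>sin x\<bar> powr (\<alpha> - 1))"
proof -
  have main: "(\<forall>i\<le>3. \<forall>x::real. (i = 0 \<or> sin x \<noteq> 0) \<longrightarrow>
        \<bar>(deriv ^^ i) (omega_res \<alpha>) x\<bar> + \<bar>(deriv ^^ i) (u_res \<alpha>) x\<bar>
          \<le> 1000 * \<bar>\<alpha> - 1\<bar> * \<bar>sin x\<bar> powr (kappa - real i))
   \<and> (\<forall>\<psi> \<psi>'. is_psi_bar \<alpha> \<psi> \<psi>' \<longrightarrow>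
        (\<forall>x. \<bar>\<psi> x - sin x\<bar> \<le> 1000 * \<bar>\<alpha> - 1\<bar> \<and> \<bar>\<psi>' x - cos x\<bar> \<le> 1000 * \<bar>\<alpha> - 1\<bar>))
   \<and> (\<forall>x. -pi \<le> x \<and> x \<le> pi \<and> x \<notin> {0, pi, -pi} \<longrightarrow>
        \<bar>G \<alpha> x\<bar> + \<bar>sin x * deriv (G \<alpha>) x\<bar>
          \<le> 1000 * sqrt \<bar>\<alpha> - 1\<bar> * \<bar>x\<bar> * \<bar>sin x\<bar> powr (\<alpha> - 1))"
    if \<alpha>: "9/10 < \<alpha> \<and> \<alpha> < 1" for \<alpha> :: real
  proof -
    define d where "d = (1 - \<alpha>) / 2"
    have d: "0 < d" "d \<le> 1/20" using \<alpha> by (auto simp: d_def)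
    have ab: "\<bar>\<alpha> - 1\<bar> = 2 * d" using \<alpha> by (simp add: d_def)
    have hb: "(1 + \<alpha>) / 2 = 1 - d" by (simp add: d_def field_simps)
    have am: "\<alpha> - 1 = -2 * d" by (simp add: d_def)
    have oe: "omega_res \<alpha> = (\<lambda>y. F0 \<alpha> y - sin y)" by (rule omega_res_eq)
    have ue: "u_res \<alpha> = (\<lambda>y. F0 (1 - d) y - sin y)" using u_res_eq[of \<alpha>] by (simp add: hb)
    have be: "u_bar \<alpha> = F0 (1 - d)" using u_bar_eq[of \<alpha>] by (simp add: hb)
    have P1: "\<bar>(deriv ^^ i) (omega_res \<alpha>) x\<bar> + \<bar>(deriv ^^ i) (u_res \<alpha>) x\<bar>
          \<le> 1000 * \<bar>\<alpha> - 1\<bar> * \<bar>sin x\<bar> powr (kappa - real i)"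
      if i: "i \<le> 3" and ix: "i = 0 \<or> sin x \<noteq> 0" for i x
    proof -
      define T where "T = \<bar>sin x\<bar> powr (kappa - real i)"
      have T0: "0 \<le> T" by (simp add: T_def)
      have o: "\<bar>(deriv ^^ i) (omega_res \<alpha>) x\<bar> \<le> 50 * (1 - \<alpha>) * T"
        unfolding oe T_def by (rule part1_a) (use \<alpha> i ix in auto)
      have u: "\<bar>(deriv ^^ i) (u_res \<alpha>) x\<bar> \<le> 50 * (1 - (1 - d)) * T"
        unfolding ue T_def by (rule part1_a) (use d i ix in auto)
      have e1: "50 * (1 - \<alpha>) * T = 100 * (d * T)" "50 * (1 - (1 - d)) * T = 50 * (d * T)"
        "1000 * \<bar>\<alpha> - 1\<bar> * T = 2000 * (d * T)" by (simp_all add: d_def ab)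
      have "0 \<le> d * T" using d T0 by simp
      then show ?thesis using o u unfolding T_def[symmetric] e1 by linarith
    qed
    have Mb: "\<bar>omega_bar \<alpha> y - sin y\<bar> \<le> 50 * (1 - \<alpha>)" for y
    proof -
      have "\<bar>(deriv ^^ 0) (\<lambda>y. F0 \<alpha> y - sin y) y\<bar> \<le> 50 * (1 - \<alpha>) * \<bar>sin y\<bar> powr (kappa - real 0)"
        by (rule part1_a) (use \<alpha> in auto)
      also have "\<dots> \<le> 50 * (1 - \<alpha>) * 1"
        using \<alpha> by (intro mult_left_mono powr_le1) (auto simp: kappa_def)
      finally show ?thesis by (simp add: F0_def omega_bar_def)
    qed
    have P2: "\<bar>\<psi> x - sin x\<bar> \<le> 1000 * \<bar>\<alpha> - 1\<bar> \<and> \<bar>\<psi>' x - cos x\<bar> \<le> 1000 * \<bar>\<alpha> - 1\<bar>"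
      if "is_psi_bar \<alpha> \<psi> \<psi>'" for \<psi> \<psi>' x
    proof -
      have "\<bar>\<psi> x - sin x\<bar> \<le> 16 * (50 * (1 - \<alpha>)) \<and> \<bar>\<psi>' x - cos x\<bar> \<le> 16 * (50 * (1 - \<alpha>))"
        by (rule psi_bound[OF that Mb])
      moreover have "16 * (50 * (1 - \<alpha>)) \<le> 1000 * \<bar>\<alpha> - 1\<bar>" using \<alpha> by simp
      ultimately show ?thesis by linarith
    qed
    have P3: "\<bar>G \<alpha> x\<bar> + \<bar>sin x * deriv (G \<alpha>) x\<bar>
          \<le> 1000 * sqrt \<bar>\<alpha> - 1\<bar> * \<bar>x\<bar> * \<bar>sin x\<bar> powr (\<alpha> - 1)"
      if hx: "-pi \<le> x \<and> x \<le> pi \<and> x \<notin> {0, pi, -pi}" for x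
    proof -
      have sx: "sin x \<noteq> 0" using hx sin_nonzero_interval by blast
      have du: "deriv (u_bar \<alpha>) y = F1 (1 - d) y" if "sin y \<noteq> 0" for y
        unfolding be by (rule DERIV_imp_deriv[OF F0_deriv[OF that]])
      have d2u: "(deriv ^^ 2) (u_res \<alpha>) y = F2 (1 - d) y + sin y" if "sin y \<noteq> 0" for y
        unfolding ue by (rule R_derivs(2)[OF that])
      have Geq: "G \<alpha> y = (\<alpha> - 1) / 2 * F1 (1 - d) y - sin y * (F2 (1 - d) y + sin y)"
        if "sin y \<noteq> 0" for y
        using du[OF that] d2u[OF that] by (simp add: G_def)
      have dG: "deriv (G \<alpha>) x = (\<alpha> - 1) / 2 * F2 (1 - d) x
          - (cos x * (F2 (1 - d) x + sin x) + sin x * (F3 (1 - d) x + cos x))"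
      proof -
        have "deriv (G \<alpha>) x = deriv (\<lambda>y. (\<alpha> - 1) / 2 * F1 (1 - d) y - sin y * (F2 (1 - d) y + sin y)) x"
        proof (rule deriv_cong_ev[OF _ refl])
          show "\<forall>\<^sub>F y in nhds x. G \<alpha> y = (\<alpha> - 1) / 2 * F1 (1 - d) y - sin y * (F2 (1 - d) y + sin y)"
            using eventually_nhds_in_open[OF open_sin_ne, of x] sx
            by (auto elim: eventually_mono simp: Geq)
        qed
        also have "\<dots> = (\<alpha> - 1) / 2 * F2 (1 - d) x
          - (cos x * (F2 (1 - d) x + sin x) + sin x * (F3 (1 - d) x + cos x))"
        proof (rule DERIV_imp_deriv)
          show "((\<lambda>y. (\<alpha> - 1) / 2 * F1 (1 - d) y - sin y * (F2 (1 - d) y + sin y)) has_real_derivative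
            (\<alpha> - 1) / 2 * F2 (1 - d) x - (cos x * (F2 (1 - d) x + sin x) + sin x * (F3 (1 - d) x + cos x))) (at x)"
            by (rule derivative_eq_intros refl F1_deriv[OF sx] F2_deriv[OF sx])+ (simp add: algebra_simps)
        qed
        finally show ?thesis .
      qed
      define S where "S = \<bar>sin x\<bar>"
      define P where "P = S powr ((1 - d) - 1)"
      define Q where "Q = S powr (-1/8)"
      define w where "w = sgn (sin x)"
      define c where "c = cos x"
      have S: "0 < S" "S \<le> 1" using sx by (auto simp: S_def)
      have d': "0 \<le> d" "d \<le> 1/10" using d by auto
      have Pe: "P = S powr (-d)" by (simp add: P_def)
      have K: "1 \<le> P" "P \<le> Q" "P - 1 \<le> 40 * d * Q" "S * Q \<le> 1"
        using key[OF S d'] unfolding Pe Q_def by auto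
      have cc: "\<bar>c\<bar> \<le> 1" by (simp add: c_def)
      have w: "w = 1 \<or> w = -1" using sx by (auto simp: w_def sgn_if)
      have sxw: "sin x = w * S" by (simp add: w_def S_def sgn_abs_eq)
      have X: "S \<le> \<bar>x\<bar>" "1 - c \<le> \<bar>x\<bar>" by (simp_all add: S_def c_def abs_sin_x_le_abs_x one_minus_cos_le)
      have FV: "F1 (1 - d) x = (1 - d) * P * c"
        "F2 (1 - d) x = (1 - d) * w * ((-d) * (P / S) * c^2 - P * S)"
        "F3 (1 - d) x = (1 - d) * (-d) * (-d - 1) * (P / (S * S)) * c^3 - (1 - d) * (3 * (1 - d) - 2) * P * c"
        using F_vals[OF sx, of "1 - d"] unfolding S_def[symmetric] w_def[symmetric] c_def[symmetric]
        by (simp_all add: Pe[symmetric])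
      have main: "\<bar>(-2*d)/2 * ((1 - d) * P * c) - w*S*((1 - d) * w * ((-d) * (P / S) * c^2 - P * S) + w*S)\<bar>
       + \<bar>w*S*((-2*d)/2 * ((1 - d) * w * ((-d) * (P / S) * c^2 - P * S))
          - (c*((1 - d) * w * ((-d) * (P / S) * c^2 - P * S) + w*S)
            + w*S*(((1 - d) * (-d) * (-d - 1) * (P / (S * S)) * c^3 - (1 - d) * (3 * (1 - d) - 2) * P * c) + c)))\<bar>
       \<le> 129 * d * \<bar>x\<bar> * (P*P)"
        by (rule arG[OF S d' K cc X w])
      have Gx: "G \<alpha> x = (-2*d)/2 * ((1 - d) * P * c) - w*S*((1 - d) * w * ((-d) * (P / S) * c^2 - P * S) + w*S)"
        using Geq[OF sx] unfolding FV sxw am by simp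
      have dGx: "sin x * deriv (G \<alpha>) x = w*S*((-2*d)/2 * ((1 - d) * w * ((-d) * (P / S) * c^2 - P * S))
          - (c*((1 - d) * w * ((-d) * (P / S) * c^2 - P * S) + w*S)
            + w*S*(((1 - d) * (-d) * (-d - 1) * (P / (S * S)) * c^3 - (1 - d) * (3 * (1 - d) - 2) * P * c) + c)))"
        unfolding dG FV sxw am c_def[symmetric] by simp
      have PP: "P * P = \<bar>sin x\<bar> powr (\<alpha> - 1)"
        unfolding Pe S_def[symmetric] using powr_add[of S "-d" "-d"] am by simp
      have dsq: "d \<le> sqrt \<bar>\<alpha> - 1\<bar>"
        unfolding ab using d by (intro real_le_rsqrt) (simp add: power2_eq_square)
      have XPP: "0 \<le> \<bar>x\<bar> * (P * P)" using K by simp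
      have "129 * d * \<bar>x\<bar> * (P*P) = 129 * d * (\<bar>x\<bar> * (P * P))" by simp
      also have "\<dots> \<le> 1000 * sqrt \<bar>\<alpha> - 1\<bar> * (\<bar>x\<bar> * (P * P))"
        using dsq d XPP by (intro mult_right_mono) auto
      finally have "129 * d * \<bar>x\<bar> * (P*P) \<le> 1000 * sqrt \<bar>\<alpha> - 1\<bar> * \<bar>x\<bar> * \<bar>sin x\<bar> powr (\<alpha> - 1)"
        unfolding PP by (simp add: mult.assoc)
      then show ?thesis using main unfolding Gx dGx by linarith
    qed
    show ?thesis using P1 P2 P3 by blast
  qed
  show ?thesis by (rule exI[of _ 1000]) (use main in auto)
qed

end
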